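(* Let $\mathcal H$ be a separable complex Hilbert space, $A\in L(\mathcal H)^+$, and $B\in L(\mathcal H)$ with closed range such that $(A,R(B))$ is compatible. Let $y\in\mathcal H$, $y\ne0$. Then $u\in\mathcal H$ is an $A$-least squares solution of $Bx=y$ if and only if there exists $T\in\Pi(A,R(B))$ with $Bu=Ty$.
   Context: $\|z\|_A=\langle Az,z\rangle^{1/2}$. $u$ is an $A$-least squares solution of $Bx=y$ if $\|y-Bu\|_A\le\|y-Bx\|_A$ for all $x\in\mathcal H$. $(A,\mathcal S)$ is compatible if there exists $Q\in L(\mathcal H)$ with $Q^2=Q$, $R(Q)=\mathcal S$, $AQ=Q^*A$. $\Pi(A,\mathcal S)$ is the set of $T\in L(\mathcal H)$ with $R(T)\subseteq\mathcal S$ and $\|w-Tw\|_A\le\|w-s\|_A$ for all $w\in\mathcal H$, $s\in\mathcal S$. *)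

theory Defs
  imports "HOL-Analysis.Analysis" "HOL-Library.Complex_Order"
begin

text \<open>HOL-Analysis has no complex inner product spaces, so we introduce them as a type class:
  a real normed vector space with a compatible complex scalar multiplication and a complex
  inner product (conjugate-linear in the first argument) inducing the norm.\<close>

class complex_inner = real_normed_vector +
  fixes scaleC :: "complex \<Rightarrow> 'a \<Rightarrow> 'a" (infixr "*\<^sub>C" 75)
    and cinner :: "'a \<Rightarrow> 'a \<Rightarrow> complex"
  assumes scaleC_add_right: "a *\<^sub>C (x + y) = a *\<^sub>C x + a *\<^sub>C y"
    and scaleC_add_left: "(a + b) *\<^sub>C x = a *\<^sub>C x + b *\<^sub>C x"
    and scaleC_scaleC: "a *\<^sub>C (b *\<^sub>C x) = (a * b) *\<^sub>C x"
    and scaleC_one: "1 *\<^sub>C x = x"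
    and scaleR_scaleC: "r *\<^sub>R x = complex_of_real r *\<^sub>C x"
    and cinner_add_left: "cinner (x + y) z = cinner x z + cinner y z"
    and cinner_scaleC_left: "cinner (a *\<^sub>C x) y = cnj a * cinner x y"
    and cinner_commute: "cinner x y = cnj (cinner y x)"
    and cinner_ge_zero: "0 \<le> cinner x x"
    and cinner_eq_zero_iff: "cinner x x = 0 \<longleftrightarrow> x = 0"
    and norm_eq_sqrt_cinner: "norm x = sqrt (Re (cinner x x))"

class chilbert_space = complex_inner + complete_space

definition separable_type :: "'a::topological_space itself \<Rightarrow> bool" where
  "separable_type _ \<longleftrightarrow> (\<exists>D::'a set. countable D \<and> closure D = UNIV)"

definition bounded_clinear :: "('a::complex_inner \<Rightarrow> 'b::complex_inner) \<Rightarrow> bool" where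
  "bounded_clinear f \<longleftrightarrow>
     (\<forall>x y. f (x + y) = f x + f y) \<and> (\<forall>c x. f (c *\<^sub>C x) = c *\<^sub>C f x) \<and>
     (\<exists>K. \<forall>x. norm (f x) \<le> norm x * K)"

definition cadjoint :: "('a::complex_inner \<Rightarrow> 'a) \<Rightarrow> ('a \<Rightarrow> 'a)" where
  "cadjoint T = (THE S. \<forall>x y. cinner (T x) y = cinner x (S y))"

definition positive_op :: "('a::complex_inner \<Rightarrow> 'a) \<Rightarrow> bool" where
  "positive_op A \<longleftrightarrow> bounded_clinear A \<and> (\<forall>z. 0 \<le> cinner (A z) z)"

definition anorm :: "('a::complex_inner \<Rightarrow> 'a) \<Rightarrow> 'a \<Rightarrow> real" where
  "anorm A z = sqrt (Re (cinner (A z) z))"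

definition A_least_squares :: "('a::complex_inner \<Rightarrow> 'a) \<Rightarrow> ('a \<Rightarrow> 'a) \<Rightarrow> 'a \<Rightarrow> 'a \<Rightarrow> bool" where
  "A_least_squares A B y u \<longleftrightarrow> (\<forall>x. anorm A (y - B u) \<le> anorm A (y - B x))"

definition compatible :: "('a::complex_inner \<Rightarrow> 'a) \<Rightarrow> 'a set \<Rightarrow> bool" where
  "compatible A S \<longleftrightarrow>
     (\<exists>Q. bounded_clinear Q \<and> Q \<circ> Q = Q \<and> range Q = S \<and> A \<circ> Q = cadjoint Q \<circ> A)"

definition PiA :: "('a::complex_inner \<Rightarrow> 'a) \<Rightarrow> 'a set \<Rightarrow> ('a \<Rightarrow> 'a) set" where
  "PiA A S = {T. bounded_clinear T \<and> range T \<subseteq> S \<and>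
                 (\<forall>w s. s \<in> S \<longrightarrow> anorm A (w - T w) \<le> anorm A (w - s))}"

end

theory Submission
  imports Defs
begin


lemma cinner_zero_left[simp]: "cinner 0 x = 0"
proof -
  have "cinner (0+0) x = cinner 0 x + cinner 0 x" by (rule cinner_add_left)
  thus ?thesis by simp
qed

lemma cinner_add_right: "cinner x (y+z) = cinner x y + cinner x z"
  by (metis cinner_add_left cinner_commute complex_cnj_add)

lemma cinner_scaleC_right: "cinner x (a *\<^sub>C y) = a * cinner x y"
  by (metis cinner_scaleC_left cinner_commute complex_cnj_cnj complex_cnj_mult)

lemma cinner_zero_right[simp]: "cinner x 0 = 0"
  by (metis cinner_commute cinner_zero_left complex_cnj_zero)

lemma cinner_diff_left: "cinner (x - y) z = cinner x z - cinner y z"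
  using cinner_add_left[of "x-y" y z] by simp

lemma cinner_diff_right: "cinner x (y - z) = cinner x y - cinner x z"
  using cinner_add_right[of x "y-z" z] by simp

lemma scaleC_zero_left[simp]: "0 *\<^sub>C x = 0"
  using scaleR_scaleC[of 0 x] by simp

lemma scaleC_zero_right[simp]: "a *\<^sub>C 0 = 0"
proof -
  have "a *\<^sub>C (0+0) = a *\<^sub>C 0 + a *\<^sub>C 0" by (rule scaleC_add_right)
  thus ?thesis by simp
qed

lemma scaleC_diff_right: "a *\<^sub>C (x - y) = a *\<^sub>C x - a *\<^sub>C y"
  using scaleC_add_right[of a "x-y" y] by simp

lemma cinner_self_eq: "cinner x x = complex_of_real ((norm x)^2)"
proof -
  have ge: "0 \<le> cinner x x" by (rule cinner_ge_zero)
  hence "Im (cinner x x) = 0" "Re (cinner x x) \<ge> 0" by (auto simp: less_eq_complex_def)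
  moreover have "(norm x)^2 = Re (cinner x x)" using norm_eq_sqrt_cinner[of x] \<open>Re (cinner x x) \<ge> 0\<close> by simp
  ultimately show ?thesis by (simp add: complex_eq_iff)
qed

lemma norm_scaleC: "norm (a *\<^sub>C x) = cmod a * norm x"
proof -
  have "cinner (a *\<^sub>C x) (a *\<^sub>C x) = cnj a * a * cinner x x"
    by (simp add: cinner_scaleC_left cinner_scaleC_right)
  also have "cnj a * a = complex_of_real ((cmod a)^2)" by (metis complex_norm_square of_real_power mult.commute)
  finally have "complex_of_real ((norm (a *\<^sub>C x))^2) = complex_of_real (((cmod a)^2) * (norm x)^2)"
    by (simp only: cinner_self_eq of_real_mult)
  hence "(norm (a *\<^sub>C x))^2 = ((cmod a)^2) * (norm x)^2" by (simp only: of_real_eq_iff)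
  hence "(norm (a *\<^sub>C x))^2 = (cmod a * norm x)^2" by (simp add: power_mult_distrib)
  thus ?thesis by (simp add: power2_eq_iff_nonneg)
qed

lemma key_identity:
  assumes "m \<noteq> 0"
  shows "(norm (v - (cinner m v / cinner m m) *\<^sub>C m))^2 = (norm v)^2 - (cmod (cinner m v))^2 / (norm m)^2"
proof -
  define p where "p = cinner m v"
  define r where "r = (norm m)^2"
  have r0: "r \<noteq> 0" using assms by (simp add: r_def)
  have mm: "cinner m m = complex_of_real r" by (simp add: r_def cinner_self_eq)
  have vm: "cinner v m = cnj p" by (simp add: p_def flip: cinner_commute)
  define t where "t = p / complex_of_real r"
  have "cinner (v - t *\<^sub>C m) (v - t *\<^sub>C m) = cinner v v - t * cnj p - cnj t * p + cnj t * t * complex_of_real r"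
    by (simp add: cinner_diff_left cinner_diff_right cinner_scaleC_left cinner_scaleC_right mm vm p_def algebra_simps)
  also have "\<dots> = cinner v v - complex_of_real ((cmod p)^2 / r)"
  proof -
    have pc: "p * cnj p = complex_of_real ((cmod p)^2)" by (metis complex_norm_square of_real_power)
    have ct: "cnj t = cnj p / complex_of_real r" by (simp add: t_def)
    show ?thesis unfolding ct using r0 pc by (simp add: t_def field_simps)
  qed
  finally have "cinner (v - t *\<^sub>C m) (v - t *\<^sub>C m) = complex_of_real ((norm v)^2 - (cmod p)^2 / r)"
    by (simp add: cinner_self_eq)
  hence "complex_of_real ((norm (v - t *\<^sub>C m))^2) = complex_of_real ((norm v)^2 - (cmod p)^2 / r)"
    by (simp add: cinner_self_eq)
  hence "(norm (v - t *\<^sub>C m))^2 = (norm v)^2 - (cmod p)^2 / r" by (simp only: of_real_eq_iff)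
  thus ?thesis unfolding cinner_self_eq[of m] t_def p_def r_def .
qed

lemma cauchy_schwarz: "cmod (cinner x y) \<le> norm x * norm y"
proof (cases "x = 0")
  case True thus ?thesis by simp
next
  case False
  have "0 \<le> (norm (y - (cinner x y / cinner x x) *\<^sub>C x))^2" by simp
  hence "(cmod (cinner x y))^2 / (norm x)^2 \<le> (norm y)^2" using key_identity[OF False, of y] by linarith
  hence "(cmod (cinner x y))^2 \<le> (norm y)^2 * (norm x)^2" using False by (simp add: divide_le_eq)
  hence "(cmod (cinner x y))^2 \<le> (norm x * norm y)^2" by (simp add: power_mult_distrib mult.commute)
  thus ?thesis by (simp add: abs_le_square_iff[symmetric] power2_le_iff_abs_le)
qed

lemma orth_of_min:
  assumes "\<And>t. norm v \<le> norm (v - t *\<^sub>C m)"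
  shows "cinner m v = 0"
proof (cases "m = 0")
  case True thus ?thesis by simp
next
  case False
  have "norm v \<le> norm (v - (cinner m v / cinner m m) *\<^sub>C m)" by (rule assms)
  hence "(norm v)^2 \<le> (norm (v - (cinner m v / cinner m m) *\<^sub>C m))^2" by (simp add: power_mono)
  hence "(cmod (cinner m v))^2 / (norm m)^2 \<le> 0" using key_identity[OF False, of v] by linarith
  hence "(cmod (cinner m v))^2 \<le> 0" using False by (simp add: divide_le_eq)
  thus ?thesis by simp
qed

lemma parallelogram: "(norm (a + (b::'a::complex_inner)))^2 + (norm (a - b))^2 = 2 * (norm a)^2 + 2 * (norm b)^2"
proof -
  have "cinner (a+b) (a+b) + cinner (a-b) (a-b) = 2 * cinner a a + 2 * cinner b b"
    by (simp add: cinner_add_left cinner_add_right cinner_diff_left cinner_diff_right algebra_simps)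
  hence "complex_of_real ((norm (a + b))^2 + (norm (a - b))^2) = complex_of_real (2 * (norm a)^2 + 2 * (norm b)^2)"
    by (simp only: cinner_self_eq of_real_add of_real_mult of_real_numeral)
  thus ?thesis by (simp only: of_real_eq_iff)
qed



lemma riesz:
  fixes f :: "'a::chilbert_space \<Rightarrow> complex"
  assumes add: "\<And>x y. f (x+y) = f x + f y" and hom: "\<And>c x. f (c *\<^sub>C x) = c * f x"
    and bnd: "\<And>x. cmod (f x) \<le> norm x * K"
  shows "\<exists>z. \<forall>x. f x = cinner z x"
proof (cases "\<forall>x. f x = 0")
  case True thus ?thesis by (intro exI[of _ 0]) simp
next
  case False
  then obtain w where fw: "f w \<noteq> 0" by blast
  have f0: "f 0 = 0" using add[of 0 0] by simp
  have fdiff: "f (x - y) = f x - f y" for x y using add[of "x-y" y] by simp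
  have freal: "f (r *\<^sub>R x) = complex_of_real r * f x" for r x by (simp add: scaleR_scaleC hom)
  define N where "N = {x. f x = 0}"
  have closedN: "closed N"
    unfolding closed_sequential_limits
  proof (intro allI impI)
    fix x l assume h: "(\<forall>n. x n \<in> N) \<and> x \<longlonglongrightarrow> l"
    have "(\<lambda>n. x n - l) \<longlonglongrightarrow> 0" using h by (intro LIM_zero) simp
    hence "(\<lambda>n. norm (x n - l)) \<longlonglongrightarrow> 0" by (rule tendsto_norm_zero)
    hence lim: "(\<lambda>n. norm (x n - l) * K) \<longlonglongrightarrow> 0" by (simp add: tendsto_mult_left_zero)
    have "cmod (f l) \<le> norm (x n - l) * K" for n
    proof -
      have "f (l - x n) = f l" using h fdiff[of l "x n"] by (simp add: N_def)
      hence "cmod (f l) \<le> norm (l - x n) * K" using bnd[of "l - x n"] by simp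
      thus ?thesis by (simp add: norm_minus_commute)
    qed
    hence "cmod (f l) \<le> 0" by (intro LIMSEQ_le_const[OF lim]) auto
    thus "l \<in> N" by (simp add: N_def)
  qed
  have N0: "0 \<in> N" by (simp add: N_def f0)
  have Nadd: "a + b \<in> N" if "a \<in> N" "b \<in> N" for a b using that by (simp add: N_def add)
  have NscC: "c *\<^sub>C a \<in> N" if "a \<in> N" for a c using that by (simp add: N_def hom)
  have NscR: "c *\<^sub>R a \<in> N" if "a \<in> N" for a c using that by (simp add: N_def freal)
  define D where "D = Inf ((\<lambda>n. norm (w - n)) ` N)"
  have bdd: "bdd_below ((\<lambda>n. norm (w - n)) ` N)" by (rule bdd_belowI[of _ 0]) auto
  have Dle: "D \<le> norm (w - n)" if "n \<in> N" for n unfolding D_def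
    using bdd that by (auto intro: cInf_lower)
  have D0: "0 \<le> D" unfolding D_def using N0 by (auto intro!: cInf_greatest)
  define e where "e k = inverse (real (Suc k))" for k
  have epos: "0 < e k" for k by (simp add: e_def)
  have "\<exists>n\<in>N. norm (w - n) < D + e k" for k
  proof -
    have "Inf ((\<lambda>n. norm (w - n)) ` N) < D + e k" using epos[of k] by (simp add: D_def)
    then obtain r where "r \<in> (\<lambda>n. norm (w - n)) ` N" "r < D + e k"
      using cInf_lessD[of "(\<lambda>n. norm (w - n)) ` N"] N0 by blast
    thus ?thesis by blast
  qed
  hence "\<forall>k. \<exists>n. n \<in> N \<and> norm (w - n) < D + e k" by blast
  then obtain s where s: "\<forall>k. s k \<in> N \<and> norm (w - s k) < D + e k" by (rule choice[THEN exE])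
  hence sN: "\<And>k. s k \<in> N" and sless: "\<And>k. norm (w - s k) < D + e k" by auto
  have pbound: "(norm (s j - s k))^2 \<le> 2 * (D + e j)^2 + 2 * (D + e k)^2 - 4 * D^2" for j k
  proof -
    define m where "m = (1/2) *\<^sub>R (s j + s k)"
    have mN: "m \<in> N" unfolding m_def by (intro NscR Nadd sN)
    have "(w - s j) + (w - s k) = 2 *\<^sub>R (w - m)"
      by (simp add: m_def scaleR_diff_right scaleR_2 algebra_simps)
    hence "norm ((w - s j) + (w - s k)) = 2 * norm (w - m)" by simp
    moreover have "(w - s j) - (w - s k) = s k - s j" by simp
    ultimately have "(2 * norm (w - m))^2 + (norm (s k - s j))^2 = 2 * (norm (w - s j))^2 + 2 * (norm (w - s k))^2"
      using parallelogram[of "w - s j" "w - s k"] by simp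
    moreover have "D^2 \<le> (norm (w - m))^2" using Dle[OF mN] D0 by (simp add: power_mono)
    moreover have "(norm (w - s j))^2 \<le> (D + e j)^2" using sless[of j] by (simp add: power_mono less_imp_le)
    moreover have "(norm (w - s k))^2 \<le> (D + e k)^2" using sless[of k] by (simp add: power_mono less_imp_le)
    ultimately show ?thesis by (simp add: norm_minus_commute power_mult_distrib)
  qed
  have "Cauchy s"
  proof (rule CauchyI)
    fix \<epsilon> :: real assume ep: "0 < \<epsilon>"
    define \<delta> where "\<delta> = min 1 (\<epsilon>^2 / (8*D+8))"
    have dpos: "0 < \<delta>" using ep D0 by (simp add: \<delta>_def)
    obtain M where M: "inverse (real (Suc M)) < \<delta>" using reals_Archimedean[OF dpos] by blast
    have "norm (s j - s k) < \<epsilon>" if "j \<ge> M" "k \<ge> M" for j k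
    proof -
      have ej: "e j \<le> e M" "e k \<le> e M" using that by (auto simp: e_def intro!: le_imp_inverse_le)
      have eM: "e M < \<delta>" "0 < e M" using M by (auto simp: e_def)
      have "(D + e j)^2 \<le> (D + e M)^2" "(D + e k)^2 \<le> (D + e M)^2"
        using ej epos[of j] epos[of k] D0 by (auto intro!: power_mono)
      have gen: "(n::real) \<le> 4*(c-d)" if "(a::real) \<le> c" "(b::real) \<le> c" "n \<le> 2*a+2*b-4*(d::real)" for a b c n d using that by argo
      have "(norm (s j - s k))^2 \<le> 4 * ((D + e M)^2 - D^2)" by (rule gen[OF _ _ pbound[of j k]]) fact+
      also have "\<dots> = 4 * e M * (2*D + e M)" by (simp add: power2_eq_square algebra_simps)
      also have "\<dots> \<le> 4 * \<delta> * (2*D + 1)"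
      proof -
        have "e M \<le> \<delta>" "\<delta> \<le> 1" using eM by (auto simp: \<delta>_def)
        hence "e M * (2*D + e M) \<le> \<delta> * (2*D + 1)" using eM D0 by (intro mult_mono) auto
        thus ?thesis by simp
      qed
      also have "\<dots> < \<epsilon>^2"
      proof -
        have "\<delta> \<le> \<epsilon>^2 / (8*D+8)" by (simp add: \<delta>_def)
        hence "\<delta> * (8*D+8) \<le> \<epsilon>^2" using D0 by (simp add: le_divide_eq)
        moreover have "4 * \<delta> * (2*D + 1) < \<delta> * (8*D+8)" using dpos by (simp add: algebra_simps)
        ultimately show ?thesis by linarith
      qed
      finally have "(norm (s j - s k))^2 < \<epsilon>^2" .
      thus ?thesis using ep by (simp add: power_less_imp_less_base)
    qed
    thus "\<exists>M. \<forall>m\<ge>M. \<forall>n\<ge>M. norm (s m - s n) < \<epsilon>" by blast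
  qed
  then obtain n0 where lim: "s \<longlonglongrightarrow> n0" using Cauchy_convergent convergent_def by blast
  have n0N: "n0 \<in> N" using closedN closed_sequential_limits lim sN by blast
  have "norm (w - n0) \<le> D"
  proof -
    have l1: "(\<lambda>k. norm (w - s k)) \<longlonglongrightarrow> norm (w - n0)" by (intro tendsto_intros lim)
    have l2: "(\<lambda>k. D + e k) \<longlonglongrightarrow> D + 0" unfolding e_def by (intro tendsto_intros LIMSEQ_inverse_real_of_nat)
    show ?thesis using LIMSEQ_le[OF l1 l2] sless less_imp_le by auto
  qed
  hence nD: "norm (w - n0) = D" using Dle[OF n0N] by simp
  define v where "v = w - n0"
  have orth: "cinner m v = 0" if "m \<in> N" for m
  proof (rule orth_of_min)
    fix t
    have "n0 + t *\<^sub>C m \<in> N" using that n0N by (intro Nadd NscC)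
    hence "D \<le> norm (w - (n0 + t *\<^sub>C m))" by (rule Dle)
    thus "norm v \<le> norm (v - t *\<^sub>C m)" using nD by (simp add: v_def algebra_simps)
  qed
  have fv: "f v = f w" using n0N by (simp add: v_def fdiff N_def)
  hence v0: "v \<noteq> 0" using fw f0 by auto
  have vv0: "cinner v v \<noteq> 0" using v0 cinner_eq_zero_iff by blast
  have vvr: "cnj (cinner v v) = cinner v v" by (metis cinner_commute)
  show ?thesis
  proof (intro exI allI)
    fix x
    define c where "c = f x / f v"
    have "x - c *\<^sub>C v \<in> N" using fv fw by (simp add: N_def fdiff hom c_def)
    hence "cinner (x - c *\<^sub>C v) v = 0" by (rule orth)
    hence "cinner x v = cnj c * cinner v v" by (simp add: cinner_diff_left cinner_scaleC_left)
    hence "cnj (cinner x v) = c * cinner v v" using vvr by simp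
    hence "cinner v x = c * cinner v v" by (simp only: cinner_commute[of v x])
    hence "c = cinner v x / cinner v v" using vv0 by (simp add: field_simps)
    hence "f x = (f v / cinner v v) * cinner v x" using fv fw by (simp add: c_def field_simps)
    thus "f x = cinner (cnj (f v / cinner v v) *\<^sub>C v) x" by (simp add: cinner_scaleC_left)
  qed
qed


lemma adjoint_prop:
  fixes Q :: "'a::chilbert_space \<Rightarrow> 'a"
  assumes "bounded_clinear Q"
  shows "cinner (Q x) y = cinner x (cadjoint Q y)"
proof -
  obtain K where K: "\<And>x. norm (Q x) \<le> norm x * K"
    and Qadd: "\<And>x y. Q (x+y) = Q x + Q y" and Qhom: "\<And>c x. Q (c *\<^sub>C x) = c *\<^sub>C Q x"
    using assms unfolding bounded_clinear_def by blast
  have "\<exists>z. \<forall>x. cinner yy (Q x) = cinner z x" for yy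
  proof (rule riesz[where f = "\<lambda>x. cinner yy (Q x)" and K = "norm yy * K", simplified])
    show "cinner yy (Q (a + b)) = cinner yy (Q a) + cinner yy (Q b)" for a b by (simp add: Qadd cinner_add_right)
    show "cinner yy (Q (c *\<^sub>C a)) = c * cinner yy (Q a)" for c a by (simp add: Qhom cinner_scaleC_right)
    show "cmod (cinner yy (Q a)) \<le> norm a * (norm yy * K)" for a
    proof -
      have "cmod (cinner yy (Q a)) \<le> norm yy * norm (Q a)" by (rule cauchy_schwarz)
      also have "\<dots> \<le> norm yy * (norm a * K)" using K by (simp add: mult_left_mono)
      finally show ?thesis by (simp add: algebra_simps)
    qed
  qed
  hence "\<forall>yy. \<exists>z. \<forall>x. cinner yy (Q x) = cinner z x" by blast
  then obtain S where S0: "\<forall>yy. \<forall>x. cinner yy (Q x) = cinner (S yy) x" by (rule choice[THEN exE])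
  hence S: "\<And>yy x. cinner yy (Q x) = cinner (S yy) x" by blast
  have Sp: "\<forall>x y. cinner (Q x) y = cinner x (S y)"
  proof (intro allI)
    fix x y
    have "cinner (Q x) y = cnj (cinner y (Q x))" by (rule cinner_commute)
    also have "\<dots> = cnj (cinner (S y) x)" by (simp only: S)
    also have "\<dots> = cinner x (S y)" by (simp only: cinner_commute[of x "S y"])
    finally show "cinner (Q x) y = cinner x (S y)" .
  qed
  have uniq: "S' = S" if h: "\<forall>x y. cinner (Q x) y = cinner x (S' y)" for S'
  proof
    fix yy
    define w where "w = S' yy - S yy"
    have e1: "cinner w (S' yy) = cinner (Q w) yy" using h[rule_format, of w yy] by (rule sym)
    have e2: "cinner w (S yy) = cinner (Q w) yy" using Sp[rule_format, of w yy] by (rule sym)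
    have "cinner w w = 0" unfolding w_def[symmetric, THEN sym] using e1 e2
      by (simp only: w_def cinner_diff_right) simp
    hence "w = 0" by (simp only: cinner_eq_zero_iff)
    thus "S' yy = S yy" by (simp add: w_def)
  qed
  have "cadjoint Q = S" unfolding cadjoint_def by (rule the_equality[where P="\<lambda>S. \<forall>x y. cinner (Q x) y = cinner x (S y)", OF Sp uniq])
  thus ?thesis using Sp by simp
qed



lemma bc_add: "bounded_clinear f \<Longrightarrow> f (x + y) = f x + f y"
  unfolding bounded_clinear_def by blast
lemma bc_scale: "bounded_clinear f \<Longrightarrow> f (c *\<^sub>C x) = c *\<^sub>C f x"
  unfolding bounded_clinear_def by blast
lemma bc_diff: "bounded_clinear f \<Longrightarrow> f (x - y) = f x - f y"
  using bc_add[of f "x - y" y] by simp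
lemma bc_zero: "bounded_clinear f \<Longrightarrow> f 0 = 0"
  using bc_diff[of f 0 0] by simp
lemma bc_bound: "bounded_clinear f \<Longrightarrow> \<exists>K\<ge>0. \<forall>x. norm (f x) \<le> norm x * K"
proof -
  assume "bounded_clinear f"
  then obtain K where K: "\<And>x. norm (f x) \<le> norm x * K" unfolding bounded_clinear_def by blast
  have "norm (f x) \<le> norm x * max K 0" for x
    using K[of x] by (smt (verit) mult_left_mono max.cobounded1 norm_ge_zero)
  thus ?thesis by (intro exI[of _ "max K 0"]) auto
qed

lemma cinner_expand:
  assumes "bounded_clinear A"
  shows "cinner (A (a + t)) (a + t) = cinner (A a) a + cinner (A a) t + cinner (A t) a + cinner (A t) t"
  using assms by (simp add: bc_add cinner_add_left cinner_add_right algebra_simps)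

lemma anorm_le_iff:
  assumes "positive_op A"
  shows "anorm A a \<le> anorm A b \<longleftrightarrow> Re (cinner (A a) a) \<le> Re (cinner (A b) b)"
proof -
  have "0 \<le> Re (cinner (A z) z)" for z using assms unfolding positive_op_def by (auto simp: less_eq_complex_def)
  thus ?thesis unfolding anorm_def by simp
qed

theorem mainTheorem12:
  fixes A B :: "'a::chilbert_space \<Rightarrow> 'a" and y u :: 'a
  assumes "separable_type TYPE('a)"
    and "positive_op A"
    and "bounded_clinear B"
    and "closed (range B)"
    and "compatible A (range B)"
    and "y \<noteq> 0"
  shows "A_least_squares A B y u \<longleftrightarrow> (\<exists>T \<in> PiA A (range B). B u = T y)"
proof
  assume "\<exists>T \<in> PiA A (range B). B u = T y"
  then obtain T where T: "T \<in> PiA A (range B)" and Tu: "B u = T y" by blast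
  show "A_least_squares A B y u" unfolding A_least_squares_def
  proof
    fix x
    show "anorm A (y - B u) \<le> anorm A (y - B x)" using T unfolding Tu PiA_def by auto
  qed
next
  assume ls: "A_least_squares A B y u"
  obtain Q where Qb: "bounded_clinear Q" and QQ: "Q \<circ> Q = Q" and RQ: "range Q = range B"
    and AQ: "A \<circ> Q = cadjoint Q \<circ> A"
    using assms(5) unfolding compatible_def by blast
  have Ab: "bounded_clinear A" using assms(2) unfolding positive_op_def by blast
  have Apos: "0 \<le> cinner (A z) z" for z using assms(2) unfolding positive_op_def by blast
  have Qidem: "Q (Q x) = Q x" for x using QQ by (metis comp_apply)
  have inS: "s \<in> range B \<longleftrightarrow> Q s = s" for s
  proof
    assume "s \<in> range B"
    then obtain t where "s = Q t" using RQ by auto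
    thus "Q s = s" by (simp add: Qidem)
  next
    assume "Q s = s" thus "s \<in> range B" using RQ by (metis rangeI)
  qed
  have AQx: "cinner (A (Q x)) z = cinner (A x) (Q z)" for x z
  proof -
    have "A (Q x) = cadjoint Q (A x)" using AQ by (metis comp_apply)
    hence "cinner (A (Q x)) z = cnj (cinner z (cadjoint Q (A x)))" by (simp only: cinner_commute[of _ z])
    also have "\<dots> = cnj (cinner (Q z) (A x))" by (simp only: adjoint_prop[OF Qb])
    also have "\<dots> = cinner (A x) (Q z)" by (simp only: cinner_commute[of "A x"])
    finally show ?thesis .
  qed
  have orth1: "cinner (A (w - Q w)) s = 0" if "s \<in> range B" for w s
  proof -
    have "cinner (A (w - Q w)) s = cinner (A w) s - cinner (A w) (Q s)"
      by (simp add: bc_diff[OF Ab] cinner_diff_left AQx)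
    thus ?thesis using that inS by simp
  qed
  have orth2: "cinner (A s) (w - Q w) = 0" if "s \<in> range B" for w s
  proof -
    have "cinner (A s) (w - Q w) = cinner (A (Q s)) (w - Q w)" using that inS by simp
    also have "\<dots> = cinner (A s) (Q (w - Q w))" by (rule AQx)
    also have "Q (w - Q w) = 0" by (simp add: bc_diff[OF Qb] Qidem)
    finally show ?thesis by simp
  qed
  have pyth: "cinner (A ((w - Q w) + s)) ((w - Q w) + s) = cinner (A (w - Q w)) (w - Q w) + cinner (A s) s"
    if "s \<in> range B" for w s
    using cinner_expand[OF Ab, of "w - Q w" s] orth1[OF that] orth2[OF that] by simp
  have projQ: "anorm A (w - Q w) \<le> anorm A (w - s)" if "s \<in> range B" for w s
  proof -
    have s2: "Q w - s \<in> range B" using that inS by (simp add: bc_diff[OF Qb] Qidem)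
    have "w - s = (w - Q w) + (Q w - s)" by simp
    hence "cinner (A (w - s)) (w - s) = cinner (A (w - Q w)) (w - Q w) + cinner (A (Q w - s)) (Q w - s)"
      using pyth[OF s2, of w] by simp
    moreover have "0 \<le> Re (cinner (A (Q w - s)) (Q w - s))" using Apos by (simp add: less_eq_complex_def)
    ultimately show ?thesis using anorm_le_iff[OF assms(2)] by simp
  qed
  have Buin: "B u \<in> range B" by simp
  define d where "d = y - B u"
  define t where "t = Q d"
  have tin: "t \<in> range B" unfolding t_def using inS Qidem by simp
  have tdef: "t = Q y - B u" using Buin inS by (simp add: t_def d_def bc_diff[OF Qb])
  have At0: "cinner (A t) t = 0"
  proof -
    have "Q y \<in> range B" using inS Qidem by simp
    then obtain x0 where x0: "Q y = B x0" by auto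
    have le: "anorm A (y - B u) \<le> anorm A (y - Q y)" using ls unfolding A_least_squares_def x0 by blast
    have eq: "y - B u = (y - Q y) + t" using tdef by simp
    have "cinner (A (y - B u)) (y - B u) = cinner (A (y - Q y)) (y - Q y) + cinner (A t) t"
      using pyth[OF tin, of y] by (simp only: eq[symmetric])
    hence "Re (cinner (A t) t) \<le> 0" using le anorm_le_iff[OF assms(2)] by simp
    moreover have "0 \<le> cinner (A t) t" by (rule Apos)
    ultimately show ?thesis by (simp add: less_eq_complex_def complex_eq_iff)
  qed
  define y' where "y' = cnj (inverse (cinner y y)) *\<^sub>C y"
  have yy0: "cinner y y \<noteq> 0" using assms(6) cinner_eq_zero_iff by blast
  have y'y: "cinner y' y = 1" using yy0 by (simp add: y'_def cinner_scaleC_left)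
  define T where "T w = Q (w - cinner y' w *\<^sub>C d)" for w
  have Ty: "T y = B u" using Buin inS by (simp add: T_def y'y scaleC_one d_def)
  have Tb: "bounded_clinear T"
    unfolding bounded_clinear_def
  proof (intro conjI allI)
    fix x z
    show "T (x + z) = T x + T z"
      by (simp add: T_def cinner_add_right scaleC_add_left bc_add[OF Qb, symmetric] algebra_simps)
  next
    fix c x
    have "c *\<^sub>C x - cinner y' (c *\<^sub>C x) *\<^sub>C d = c *\<^sub>C (x - cinner y' x *\<^sub>C d)"
      by (simp add: cinner_scaleC_right scaleC_diff_right scaleC_scaleC)
    thus "T (c *\<^sub>C x) = c *\<^sub>C T x" by (simp add: T_def bc_scale[OF Qb])
  next
    obtain K where K0: "K \<ge> 0" and K: "\<And>x. norm (Q x) \<le> norm x * K" using bc_bound[OF Qb] by blast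
    have "norm (T x) \<le> norm x * ((1 + norm y' * norm d) * K)" for x
    proof -
      have "norm (x - cinner y' x *\<^sub>C d) \<le> norm x + cmod (cinner y' x) * norm d"
        using norm_triangle_ineq4[of x "cinner y' x *\<^sub>C d"] by (simp add: norm_scaleC)
      also have "\<dots> \<le> norm x + norm y' * norm x * norm d"
        using cauchy_schwarz[of y' x] by (simp add: mult_right_mono)
      finally have "norm (x - cinner y' x *\<^sub>C d) \<le> norm x * (1 + norm y' * norm d)" by (simp add: algebra_simps)
      hence "norm (x - cinner y' x *\<^sub>C d) * K \<le> norm x * (1 + norm y' * norm d) * K"
        using K0 by (simp add: mult_right_mono)
      thus ?thesis using K[of "x - cinner y' x *\<^sub>C d"] unfolding T_def by (simp add: mult.assoc)
    qed
    thus "\<exists>K. \<forall>x. norm (T x) \<le> norm x * K" by blast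
  qed
  have TPi: "T \<in> PiA A (range B)" unfolding PiA_def
  proof (intro CollectI conjI Tb allI impI)
    show "range T \<subseteq> range B" unfolding T_def using RQ by auto
  next
    fix w s assume s: "s \<in> range B"
    define c where "c = cinner y' w"
    have ct: "c *\<^sub>C t \<in> range B" using tin inS by (simp add: bc_scale[OF Qb])
    have eq: "w - T w = (w - Q w) + c *\<^sub>C t"
      by (simp add: T_def c_def t_def bc_diff[OF Qb] bc_scale[OF Qb])
    have "cinner (A (w - T w)) (w - T w) = cinner (A (w - Q w)) (w - Q w) + cinner (A (c *\<^sub>C t)) (c *\<^sub>C t)"
      using pyth[OF ct, of w] by (simp only: eq[symmetric])
    also have "cinner (A (c *\<^sub>C t)) (c *\<^sub>C t) = 0"
      by (simp add: bc_scale[OF Ab] cinner_scaleC_left cinner_scaleC_right At0)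
    finally have "anorm A (w - T w) = anorm A (w - Q w)" unfolding anorm_def by simp
    thus "anorm A (w - T w) \<le> anorm A (w - s)" using projQ[OF s] by simp
  qed
  show "\<exists>T \<in> PiA A (range B). B u = T y"
    by (rule bexI[OF _ TPi]) (rule Ty[symmetric])
qed

end
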